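(* Let $\Psi$ be a well-formed declarative context (containing only universal type variables and term-variable typings) and $A,B$ types with $\Psi\vdash A$ and $\Psi\vdash B$. If $\Psi\vdash A<:B\dashv\Delta$ for some context $\Delta$ (algorithmic subtyping), then $\Psi\vdash A\le B$ (declarative subtyping).
   Context: Declarative types $A ::= 1\mid\alpha\mid\forall\alpha.A\mid A\to B$; declarative contexts $\Psi ::= \cdot\mid\Psi,\alpha\mid\Psi,x:A$. Declarative subtyping $\Psi\vdash A\le B$: least relation with $\alpha\in\Psi\Rightarrow\Psi\vdash\alpha\le\alpha$; $\Psi\vdash1\le1$; ($\Psi\vdash B_1\le A_1$, $\Psi\vdash A_2\le B_2$) $\Rightarrow\Psi\vdash A_1\to A_2\le B_1\to B_2$; ($\Psi\vdash\tau$ for a quantifier-free $\tau$, $\Psi\vdash[\tau/\alpha]A\le B$) $\Rightarrow\Psi\vdash\forall\alpha.A\le B$; $\Psi,\beta\vdash A\le B\Rightarrow\Psi\vdash A\le\forall\beta.B$. Algorithmic types add existential variables $\hat\alpha$: $A ::= 1\mid\alpha\mid\hat\alpha\mid\forall\alpha.A\mid A\to B$; monotypes $\tau ::= 1\mid\alpha\mid\hat\alpha\mid\tau\to\tau'$. Algorithmic contexts $\Gamma ::= \cdot\mid\Gamma,\alpha\mid\Gamma,x:A\mid\Gamma,\hat\alpha\mid\Gamma,\hat\alpha=\tau\mid\Gamma,\blacktriangleright_{\hat\alpha}$ (unsolved evar, solved evar, marker), each variable declared at most once, each type/solution well-formed under the prefix to its left. $\Gamma\vdash A$: $\alpha$ declared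 in $\Gamma$, $\hat\alpha$ declared (solved or not) in $\Gamma$, arrows componentwise, $\Gamma\vdash\forall\alpha.A$ iff $\Gamma,\alpha\vdash A$. $\Gamma[\Theta]$ denotes a context with $\Theta$ somewhere inside; $\Gamma[\hat\alpha][\hat\beta]$ means $\hat\alpha$ is declared to the left of $\hat\beta$. $[\Gamma]A$ replaces each solved $\hat\alpha$ (with $\hat\alpha=\tau\in\Gamma$) by $[\Gamma]\tau$, recursively. Variables introduced in premises ($\hat\alpha,\hat\alpha_1,\hat\alpha_2,\hat\beta,\beta$) are fresh. Algorithmic subtyping $\Gamma\vdash A<:B\dashv\Delta$: $\Gamma[\alpha]\vdash\alpha<:\alpha\dashv\Gamma[\alpha]$; $\Gamma\vdash1<:1\dashv\Gamma$; $\Gamma[\hat\alpha]\vdash\hat\alpha<:\hat\alpha\dashv\Gamma[\hat\alpha]$; ($\Gamma\vdash B_1<:A_1\dashv\Theta$, $\Theta\vdash[\Theta]A_2<:[\Theta]B_2\dashv\Delta$) $\Rightarrow\Gamma\vdash A_1\to A_2<:B_1\to B_2\dashv\Delta$; $\Gamma,\blacktriangleright_{\hat\alpha},\hat\alpha\vdash[\hat\alpha/\alpha]A<:B\dashv\Delta,\blacktriangleright_{\hat\alpha},\Theta\Rightarrow\Gamma\vdash\forall\alpha.A<:B\dashv\Delta$; $\Gamma,\alpha\vdash A<:B\dashv\Delta,\alpha,\Theta\Rightarrow\Gamma\vdash A<:\forall\alpha.B\dashv\Delta$; ($\hat\alpha\notin FV(A)$, $\Gamma[\hat\alpha]\vdash\hat\alpha:\leqq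 A\dashv\Delta$) $\Rightarrow\Gamma[\hat\alpha]\vdash\hat\alpha<:A\dashv\Delta$; ($\hat\alpha\notin FV(A)$, $\Gamma[\hat\alpha]\vdash A\leqq:\hat\alpha\dashv\Delta$) $\Rightarrow\Gamma[\hat\alpha]\vdash A<:\hat\alpha\dashv\Delta$. Instantiation $\Gamma\vdash\hat\alpha:\leqq A\dashv\Delta$: ($\Gamma\vdash\tau$ monotype) $\Rightarrow\Gamma,\hat\alpha,\Gamma'\vdash\hat\alpha:\leqq\tau\dashv\Gamma,\hat\alpha=\tau,\Gamma'$; $\Gamma[\hat\alpha][\hat\beta]\vdash\hat\alpha:\leqq\hat\beta\dashv\Gamma[\hat\alpha][\hat\beta=\hat\alpha]$; ($\Gamma[\hat\alpha_2,\hat\alpha_1,\hat\alpha=\hat\alpha_1\to\hat\alpha_2]\vdash A_1\leqq:\hat\alpha_1\dashv\Theta$, $\Theta\vdash\hat\alpha_2:\leqq[\Theta]A_2\dashv\Delta$) $\Rightarrow\Gamma[\hat\alpha]\vdash\hat\alpha:\leqq A_1\to A_2\dashv\Delta$; $\Gamma[\hat\alpha],\beta\vdash\hat\alpha:\leqq B\dashv\Delta,\beta,\Delta'\Rightarrow\Gamma[\hat\alpha]\vdash\hat\alpha:\leqq\forall\beta.B\dashv\Delta$. Instantiation $\Gamma\vdash A\leqq:\hat\alpha\dashv\Delta$: ($\Gamma\vdash\tau$) $\Rightarrow\Gamma,\hat\alpha,\Gamma'\vdash\tau\leqq:\hat\alpha\dashv\Gamma,\hat\alpha=\tau,\Gamma'$;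 $\Gamma[\hat\alpha][\hat\beta]\vdash\hat\beta\leqq:\hat\alpha\dashv\Gamma[\hat\alpha][\hat\beta=\hat\alpha]$; ($\Gamma[\hat\alpha_2,\hat\alpha_1,\hat\alpha=\hat\alpha_1\to\hat\alpha_2]\vdash\hat\alpha_1:\leqq A_1\dashv\Theta$, $\Theta\vdash[\Theta]A_2\leqq:\hat\alpha_2\dashv\Delta$) $\Rightarrow\Gamma[\hat\alpha]\vdash A_1\to A_2\leqq:\hat\alpha\dashv\Delta$; $\Gamma[\hat\alpha],\blacktriangleright_{\hat\beta},\hat\beta\vdash[\hat\beta/\beta]B\leqq:\hat\alpha\dashv\Delta,\blacktriangleright_{\hat\beta},\Delta'\Rightarrow\Gamma[\hat\alpha]\vdash\forall\beta.B\leqq:\hat\alpha\dashv\Delta$. *)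

theory Defs
  imports Main
begin

text \<open>Types in locally nameless representation: bound type variables are
de Bruijn indices (TBVar), free universal variables are TVar, existential
variables are TEVar.  TAll binds index 0.\<close>

datatype ty =
    TUnit
  | TBVar nat
  | TVar nat
  | TEVar nat
  | TAll ty
  | TArr ty ty

fun open_rec :: "nat \<Rightarrow> ty \<Rightarrow> ty \<Rightarrow> ty" where
  "open_rec k u TUnit = TUnit"
| "open_rec k u (TBVar i) = (if i = k then u else TBVar i)"
| "open_rec k u (TVar a) = TVar a"
| "open_rec k u (TEVar a) = TEVar a"
| "open_rec k u (TAll A) = TAll (open_rec (Suc k) u A)"
| "open_rec k u (TArr A B) = TArr (open_rec k u A) (open_rec k u B)"

text \<open>For \<open>TAll A\<close> (i.e. \<forall>\<alpha>. A), \<open>open_typ A u\<close> is [u/\<alpha>]A.\<close>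
definition open_typ :: "ty \<Rightarrow> ty \<Rightarrow> ty" where
  "open_typ A u = open_rec 0 u A"

fun ftv :: "ty \<Rightarrow> nat set" where
  "ftv TUnit = {}"
| "ftv (TBVar i) = {}"
| "ftv (TVar a) = {a}"
| "ftv (TEVar a) = {}"
| "ftv (TAll A) = ftv A"
| "ftv (TArr A B) = ftv A \<union> ftv B"

fun fev :: "ty \<Rightarrow> nat set" where
  "fev TUnit = {}"
| "fev (TBVar i) = {}"
| "fev (TVar a) = {}"
| "fev (TEVar a) = {a}"
| "fev (TAll A) = fev A"
| "fev (TArr A B) = fev A \<union> fev B"

fun mono :: "ty \<Rightarrow> bool" where
  "mono TUnit = True"
| "mono (TBVar i) = False"
| "mono (TVar a) = True"
| "mono (TEVar a) = True"
| "mono (TAll A) = False"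
| "mono (TArr A B) = (mono A \<and> mono B)"

fun esubst :: "nat \<Rightarrow> ty \<Rightarrow> ty \<Rightarrow> ty" where
  "esubst a t TUnit = TUnit"
| "esubst a t (TBVar i) = TBVar i"
| "esubst a t (TVar b) = TVar b"
| "esubst a t (TEVar b) = (if b = a then t else TEVar b)"
| "esubst a t (TAll A) = TAll (esubst a t A)"
| "esubst a t (TArr A B) = TArr (esubst a t A) (esubst a t B)"

text \<open>Context entries; contexts are lists growing to the right
(\<open>\<Gamma>, e\<close> is \<open>\<Gamma> @ [e]\<close>).\<close>
datatype centry =
    CTVar nat
  | CVar nat ty
  | CEVar nat
  | CSolved nat ty
  | CMarker nat

type_synonym ctx = "centry list"

definition tvars :: "ctx \<Rightarrow> nat set" where
  "tvars G = {a. CTVar a \<in> set G}"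

definition evars :: "ctx \<Rightarrow> nat set" where
  "evars G = {a. CEVar a \<in> set G \<or> (\<exists>t. CSolved a t \<in> set G)}"

definition markers :: "ctx \<Rightarrow> nat set" where
  "markers G = {a. CMarker a \<in> set G}"

definition vars :: "ctx \<Rightarrow> nat set" where
  "vars G = {x. \<exists>A. CVar x A \<in> set G}"

inductive wf_typ :: "ctx \<Rightarrow> ty \<Rightarrow> bool" where
  wf_unit: "wf_typ G TUnit"
| wf_tvar: "a \<in> tvars G \<Longrightarrow> wf_typ G (TVar a)"
| wf_evar: "a \<in> evars G \<Longrightarrow> wf_typ G (TEVar a)"
| wf_arr: "wf_typ G A \<Longrightarrow> wf_typ G B \<Longrightarrow> wf_typ G (TArr A B)"
| wf_all: "a \<notin> tvars G \<Longrightarrow> a \<notin> ftv A \<Longrightarrow>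
           wf_typ (G @ [CTVar a]) (open_typ A (TVar a)) \<Longrightarrow> wf_typ G (TAll A)"

inductive wf_ctx :: "ctx \<Rightarrow> bool" where
  wfc_nil: "wf_ctx []"
| wfc_tvar: "wf_ctx G \<Longrightarrow> a \<notin> tvars G \<Longrightarrow> wf_ctx (G @ [CTVar a])"
| wfc_var: "wf_ctx G \<Longrightarrow> x \<notin> vars G \<Longrightarrow> wf_typ G A \<Longrightarrow> wf_ctx (G @ [CVar x A])"
| wfc_evar: "wf_ctx G \<Longrightarrow> a \<notin> evars G \<Longrightarrow> wf_ctx (G @ [CEVar a])"
| wfc_solved: "wf_ctx G \<Longrightarrow> a \<notin> evars G \<Longrightarrow> mono t \<Longrightarrow> wf_typ G t \<Longrightarrow>
               wf_ctx (G @ [CSolved a t])"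
| wfc_marker: "wf_ctx G \<Longrightarrow> a \<notin> evars G \<Longrightarrow> a \<notin> markers G \<Longrightarrow>
               wf_ctx (G @ [CMarker a])"

definition decl_ctx :: "ctx \<Rightarrow> bool" where
  "decl_ctx G \<longleftrightarrow> (\<forall>e \<in> set G. (\<exists>a. e = CTVar a) \<or> (\<exists>x A. e = CVar x A))"

text \<open>Context application [\<Gamma>]A: substitute solved existentials, rightmost
first, so that solutions mentioning earlier existentials are also resolved.\<close>
fun capp_rev :: "ctx \<Rightarrow> ty \<Rightarrow> ty" where
  "capp_rev [] A = A"
| "capp_rev (CSolved a t # G) A = capp_rev G (esubst a t A)"
| "capp_rev (CTVar a # G) A = capp_rev G A"
| "capp_rev (CVar x B # G) A = capp_rev G A"
| "capp_rev (CEVar a # G) A = capp_rev G A"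
| "capp_rev (CMarker a # G) A = capp_rev G A"

definition capp :: "ctx \<Rightarrow> ty \<Rightarrow> ty" where
  "capp G A = capp_rev (rev G) A"

inductive dsub :: "ctx \<Rightarrow> ty \<Rightarrow> ty \<Rightarrow> bool" where
  ds_var: "CTVar a \<in> set P \<Longrightarrow> dsub P (TVar a) (TVar a)"
| ds_unit: "dsub P TUnit TUnit"
| ds_arr: "dsub P B1 A1 \<Longrightarrow> dsub P A2 B2 \<Longrightarrow> dsub P (TArr A1 A2) (TArr B1 B2)"
| ds_allL: "mono t \<Longrightarrow> wf_typ P t \<Longrightarrow> dsub P (open_typ A t) B \<Longrightarrow> dsub P (TAll A) B"
| ds_allR: "b \<notin> tvars P \<Longrightarrow> b \<notin> ftv A \<Longrightarrow> b \<notin> ftv B \<Longrightarrow>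
            dsub (P @ [CTVar b]) A (open_typ B (TVar b)) \<Longrightarrow> dsub P A (TAll B)"

inductive instL :: "ctx \<Rightarrow> nat \<Rightarrow> ty \<Rightarrow> ctx \<Rightarrow> bool"
  and instR :: "ctx \<Rightarrow> ty \<Rightarrow> nat \<Rightarrow> ctx \<Rightarrow> bool" where
  instL_solve: "mono t \<Longrightarrow> wf_typ G1 t \<Longrightarrow>
      instL (G1 @ [CEVar a] @ G2) a t (G1 @ [CSolved a t] @ G2)"
| instL_reach: "instL (G1 @ [CEVar a] @ G2 @ [CEVar b] @ G3) a (TEVar b)
      (G1 @ [CEVar a] @ G2 @ [CSolved b (TEVar a)] @ G3)"
| instL_arr: "a1 \<noteq> a2 \<Longrightarrow> a1 \<notin> evars (G1 @ [CEVar a] @ G2) \<union> markers (G1 @ [CEVar a] @ G2) \<Longrightarrow>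
      a2 \<notin> evars (G1 @ [CEVar a] @ G2) \<union> markers (G1 @ [CEVar a] @ G2) \<Longrightarrow>
      a1 \<notin> fev A1 \<union> fev A2 \<Longrightarrow> a2 \<notin> fev A1 \<union> fev A2 \<Longrightarrow>
      instR (G1 @ [CEVar a2, CEVar a1, CSolved a (TArr (TEVar a1) (TEVar a2))] @ G2) A1 a1 T \<Longrightarrow>
      instL T a2 (capp T A2) D \<Longrightarrow>
      instL (G1 @ [CEVar a] @ G2) a (TArr A1 A2) D"
| instL_allR: "CEVar a \<in> set G \<Longrightarrow> b \<notin> tvars G \<Longrightarrow> b \<notin> ftv B \<Longrightarrow>
      instL (G @ [CTVar b]) a (open_typ B (TVar b)) (D @ [CTVar b] @ D') \<Longrightarrow>
      instL G a (TAll B) D"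
| instR_solve: "mono t \<Longrightarrow> wf_typ G1 t \<Longrightarrow>
      instR (G1 @ [CEVar a] @ G2) t a (G1 @ [CSolved a t] @ G2)"
| instR_reach: "instR (G1 @ [CEVar a] @ G2 @ [CEVar b] @ G3) (TEVar b) a
      (G1 @ [CEVar a] @ G2 @ [CSolved b (TEVar a)] @ G3)"
| instR_arr: "a1 \<noteq> a2 \<Longrightarrow> a1 \<notin> evars (G1 @ [CEVar a] @ G2) \<union> markers (G1 @ [CEVar a] @ G2) \<Longrightarrow>
      a2 \<notin> evars (G1 @ [CEVar a] @ G2) \<union> markers (G1 @ [CEVar a] @ G2) \<Longrightarrow>
      a1 \<notin> fev A1 \<union> fev A2 \<Longrightarrow> a2 \<notin> fev A1 \<union> fev A2 \<Longrightarrow>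
      instL (G1 @ [CEVar a2, CEVar a1, CSolved a (TArr (TEVar a1) (TEVar a2))] @ G2) a1 A1 T \<Longrightarrow>
      instR T (capp T A2) a2 D \<Longrightarrow>
      instR (G1 @ [CEVar a] @ G2) (TArr A1 A2) a D"
| instR_allL: "CEVar a \<in> set G \<Longrightarrow> b \<notin> evars G \<union> markers G \<Longrightarrow> b \<notin> fev B \<Longrightarrow>
      instR (G @ [CMarker b, CEVar b]) (open_typ B (TEVar b)) a (D @ [CMarker b] @ D') \<Longrightarrow>
      instR G (TAll B) a D"

inductive asub :: "ctx \<Rightarrow> ty \<Rightarrow> ty \<Rightarrow> ctx \<Rightarrow> bool" where
  as_var: "CTVar a \<in> set G \<Longrightarrow> asub G (TVar a) (TVar a) G"
| as_unit: "asub G TUnit TUnit G"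
| as_evar: "CEVar a \<in> set G \<Longrightarrow> asub G (TEVar a) (TEVar a) G"
| as_arr: "asub G B1 A1 T \<Longrightarrow> asub T (capp T A2) (capp T B2) D \<Longrightarrow>
      asub G (TArr A1 A2) (TArr B1 B2) D"
| as_allL: "a \<notin> evars G \<union> markers G \<Longrightarrow> a \<notin> fev A \<union> fev B \<Longrightarrow>
      asub (G @ [CMarker a, CEVar a]) (open_typ A (TEVar a)) B (D @ [CMarker a] @ T) \<Longrightarrow>
      asub G (TAll A) B D"
| as_allR: "b \<notin> tvars G \<Longrightarrow> b \<notin> ftv A \<union> ftv B \<Longrightarrow>
      asub (G @ [CTVar b]) A (open_typ B (TVar b)) (D @ [CTVar b] @ T) \<Longrightarrow>
      asub G A (TAll B) D"
| as_instL: "CEVar a \<in> set G \<Longrightarrow> a \<notin> fev A \<Longrightarrow> instL G a A D \<Longrightarrow> asub G (TEVar a) A D"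
| as_instR: "CEVar a \<in> set G \<Longrightarrow> a \<notin> fev A \<Longrightarrow> instR G A a D \<Longrightarrow> asub G A (TEVar a) D"

end

theory Submission imports Defs begin

fun lcn :: "nat \<Rightarrow> ty \<Rightarrow> bool" where
  "lcn k TUnit = True"
| "lcn k (TBVar i) = (i < k)"
| "lcn k (TVar a) = True"
| "lcn k (TEVar a) = True"
| "lcn k (TAll A) = lcn (Suc k) A"
| "lcn k (TArr A B) = (lcn k A \<and> lcn k B)"

lemma lcn_open_inv: "lcn k (open_rec k u A) \<Longrightarrow> lcn (Suc k) A"
  by (induction A arbitrary: k) (auto split: if_splits)

lemma lcn_mono_k: "lcn k A \<Longrightarrow> k \<le> j \<Longrightarrow> lcn j A"
  by (induction A arbitrary: k j) auto

lemma lcn_open: "lcn (Suc k) A \<Longrightarrow> lcn k u \<Longrightarrow> lcn k (open_rec k u A)"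
proof (induction A arbitrary: k u)
  case (TAll A)
  then show ?case using lcn_mono_k[of k u "Suc k"] by auto
qed auto

lemma ftv_open_sub: "ftv A \<subseteq> ftv (open_rec k u A)"
  by (induction A arbitrary: k) auto
lemma fev_open_sub: "fev A \<subseteq> fev (open_rec k u A)"
  by (induction A arbitrary: k) auto
lemma ftv_open_sup: "ftv (open_rec k u A) \<subseteq> ftv A \<union> ftv u"
  by (induction A arbitrary: k) auto
lemma fev_open_sup: "fev (open_rec k u A) \<subseteq> fev A \<union> fev u"
  by (induction A arbitrary: k) auto
lemma size_open_tvar[simp]: "size (open_rec k (TVar a) A) = size A"
  by (induction A arbitrary: k) auto

lemma mono_lcn: "mono t \<Longrightarrow> lcn k t"
  by (induction t) auto
lemma mono_open: "mono t \<Longrightarrow> open_rec k u t = t"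
  by (induction t) auto

lemma finite_ftv: "finite (ftv A)" by (induction A) auto
lemma finite_tvars: "finite (tvars G)"
proof -
  have "tvars G = CTVar -` set G" by (auto simp: tvars_def)
  thus ?thesis by (simp add: finite_vimageI inj_def)
qed

lemma wf_typ_char_1: "wf_typ G A \<Longrightarrow> lcn 0 A \<and> ftv A \<subseteq> tvars G \<and> fev A \<subseteq> evars G"
proof (induction rule: wf_typ.induct)
  case (wf_all a G A)
  have e: "evars (G @ [CTVar a]) = evars G" "tvars (G @ [CTVar a]) = insert a (tvars G)"
    by (auto simp: evars_def tvars_def)
  from wf_all show ?case using lcn_open_inv[of 0 "TVar a" A] ftv_open_sub[of A 0 "TVar a"]
      fev_open_sub[of A 0 "TVar a"] e by (auto simp: open_typ_def)
qed auto

lemma wf_typ_char_2: "lcn 0 A \<Longrightarrow> ftv A \<subseteq> tvars G \<Longrightarrow> fev A \<subseteq> evars G \<Longrightarrow> wf_typ G A"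
proof (induction A arbitrary: G rule: measure_induct_rule[of size])
  case (less A)
  show ?case
  proof (cases A)
    case (TAll B)
    obtain a where a: "a \<notin> tvars G \<union> ftv B"
      using ex_new_if_finite[OF infinite_UNIV_nat, of "tvars G \<union> ftv B"] finite_ftv finite_tvars by auto
    have e: "evars (G @ [CTVar a]) = evars G" "tvars (G @ [CTVar a]) = insert a (tvars G)"
      by (auto simp: evars_def tvars_def)
    have "wf_typ (G @ [CTVar a]) (open_rec 0 (TVar a) B)"
      apply (rule less.IH)
      using less.prems TAll e lcn_open[of 0 B "TVar a"] ftv_open_sup[of 0 "TVar a" B] fev_open_sup[of 0 "TVar a" B]
      by auto
    thus ?thesis using TAll a less.prems by (auto intro!: wf_all simp: open_typ_def)
  qed (use less in \<open>auto intro: wf_typ.intros simp: tvars_def\<close>)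
qed

lemma wf_typ_char: "wf_typ G A \<longleftrightarrow> lcn 0 A \<and> ftv A \<subseteq> tvars G \<and> fev A \<subseteq> evars G"
  using wf_typ_char_1 wf_typ_char_2 by blast

fun tsub :: "(nat \<Rightarrow> ty) \<Rightarrow> ty \<Rightarrow> ty" where
  "tsub th TUnit = TUnit"
| "tsub th (TBVar i) = TBVar i"
| "tsub th (TVar a) = TVar a"
| "tsub th (TEVar a) = th a"
| "tsub th (TAll A) = TAll (tsub th A)"
| "tsub th (TArr A B) = TArr (tsub th A) (tsub th B)"

lemma tsub_open: "(\<forall>c\<in>fev A. mono (th c)) \<Longrightarrow> tsub th (open_rec k u A) = open_rec k (tsub th u) (tsub th A)"
  by (induction A arbitrary: k) (auto simp: mono_open)

lemma tsub_cong: "(\<forall>c\<in>fev A. th c = th' c) \<Longrightarrow> tsub th A = tsub th' A"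
  by (induction A) auto

lemma fev_tsub: "(\<forall>c\<in>fev A. fev (th c) = {}) \<Longrightarrow> fev (tsub th A) = {}"
  by (induction A) auto

lemma ftv_tsub: "ftv (tsub th A) \<subseteq> ftv A \<union> (\<Union>c\<in>fev A. ftv (th c))"
  by (induction A) auto

lemma mono_tsub: "mono A \<Longrightarrow> (\<forall>c\<in>fev A. mono (th c)) \<Longrightarrow> mono (tsub th A)"
  by (induction A) auto

lemma tsub_nofev: "fev A = {} \<Longrightarrow> tsub th A = A"
  by (induction A) auto

lemma tsub_esubst: "th a = tsub th t \<Longrightarrow> tsub th (esubst a t A) = tsub th A"
  by (induction A) auto

lemma lcn_esubst: "lcn k A \<Longrightarrow> mono t \<Longrightarrow> lcn k (esubst a t A)"
  by (induction A arbitrary: k) (auto simp: mono_lcn)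
lemma ftv_esubst: "ftv (esubst a t A) \<subseteq> ftv A \<union> ftv t"
  by (induction A) auto
lemma fev_esubst: "fev (esubst a t A) \<subseteq> fev A \<union> fev t"
  by (induction A) auto

lemma capp_rev_tsub: "(\<forall>c t. CSolved c t \<in> set R \<longrightarrow> th c = tsub th t) \<Longrightarrow> tsub th (capp_rev R A) = tsub th A"
  by (induction R A rule: capp_rev.induct) (auto simp: tsub_esubst)

lemma capp_rev_wf: "(\<forall>c t. CSolved c t \<in> set R \<longrightarrow> mono t \<and> ftv t \<subseteq> S \<and> fev t \<subseteq> E)
  \<Longrightarrow> lcn 0 A \<Longrightarrow> ftv A \<subseteq> S \<Longrightarrow> fev A \<subseteq> E
  \<Longrightarrow> lcn 0 (capp_rev R A) \<and> ftv (capp_rev R A) \<subseteq> S \<and> fev (capp_rev R A) \<subseteq> E"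
proof (induction R A rule: capp_rev.induct)
  case (2 a t G A)
  have "lcn 0 (esubst a t A) \<and> ftv (esubst a t A) \<subseteq> S \<and> fev (esubst a t A) \<subseteq> E"
  proof -
    have m: "mono t \<and> ftv t \<subseteq> S \<and> fev t \<subseteq> E" using 2(2) by auto
    show ?thesis using 2(3,4,5) m lcn_esubst[of 0 A t a] ftv_esubst[of a t A] fev_esubst[of a t A] by blast
  qed
  then show ?case using 2 by simp
qed auto

lemma tvars_simps[simp]: "tvars [] = {}" "tvars (G @ H) = tvars G \<union> tvars H"
  "tvars (e # G) = (case e of CTVar a \<Rightarrow> insert a (tvars G) | _ \<Rightarrow> tvars G)"
  by (auto simp: tvars_def split: centry.splits)
lemma evars_simps[simp]: "evars [] = {}" "evars (G @ H) = evars G \<union> evars H"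
  "evars (e # G) = (case e of CEVar a \<Rightarrow> insert a (evars G) | CSolved a t \<Rightarrow> insert a (evars G) | _ \<Rightarrow> evars G)"
  by (auto simp: evars_def split: centry.splits)
lemma markers_simps[simp]: "markers [] = {}" "markers (G @ H) = markers G \<union> markers H"
  "markers (e # G) = (case e of CMarker a \<Rightarrow> insert a (markers G) | _ \<Rightarrow> markers G)"
  by (auto simp: markers_def split: centry.splits)
lemma vars_simps[simp]: "vars [] = {}" "vars (G @ H) = vars G \<union> vars H"
  "vars (e # G) = (case e of CVar x A \<Rightarrow> insert x (vars G) | _ \<Rightarrow> vars G)"
  by (auto simp: vars_def split: centry.splits)

lemma wf_ctx_snoc: "wf_ctx (G @ [e]) \<longleftrightarrow> wf_ctx G \<and> (case e of
    CTVar a \<Rightarrow> a \<notin> tvars G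
  | CVar x A \<Rightarrow> x \<notin> vars G \<and> wf_typ G A
  | CEVar a \<Rightarrow> a \<notin> evars G
  | CSolved a t \<Rightarrow> a \<notin> evars G \<and> mono t \<and> wf_typ G t
  | CMarker a \<Rightarrow> a \<notin> evars G \<and> a \<notin> markers G)"
proof
  assume "wf_ctx (G @ [e])"
  then show "wf_ctx G \<and> (case e of
    CTVar a \<Rightarrow> a \<notin> tvars G
  | CVar x A \<Rightarrow> x \<notin> vars G \<and> wf_typ G A
  | CEVar a \<Rightarrow> a \<notin> evars G
  | CSolved a t \<Rightarrow> a \<notin> evars G \<and> mono t \<and> wf_typ G t
  | CMarker a \<Rightarrow> a \<notin> evars G \<and> a \<notin> markers G)"
    by (cases rule: wf_ctx.cases) auto
next
  assume "wf_ctx G \<and> (case e of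
    CTVar a \<Rightarrow> a \<notin> tvars G
  | CVar x A \<Rightarrow> x \<notin> vars G \<and> wf_typ G A
  | CEVar a \<Rightarrow> a \<notin> evars G
  | CSolved a t \<Rightarrow> a \<notin> evars G \<and> mono t \<and> wf_typ G t
  | CMarker a \<Rightarrow> a \<notin> evars G \<and> a \<notin> markers G)"
  then show "wf_ctx (G @ [e])"
    by (cases e) (auto intro: wf_ctx.intros)
qed

lemma wf_ctx_prefix: "wf_ctx (G @ X) \<Longrightarrow> wf_ctx G"
  by (induction X rule: rev_induct) (auto simp: wf_ctx_snoc simp flip: append_assoc)

lemma wf_ctx_tvar_uniq: "wf_ctx (D @ [CTVar b] @ T) \<Longrightarrow> CTVar b \<notin> set T"
proof (induction T rule: rev_induct)
  case (snoc x xs)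
  have "wf_ctx ((D @ [CTVar b] @ xs) @ [x])" using snoc.prems by simp
  then have w: "wf_ctx (D @ [CTVar b] @ xs)" and c: "case x of
    CTVar a \<Rightarrow> a \<notin> tvars (D @ [CTVar b] @ xs)
  | CVar x A \<Rightarrow> x \<notin> vars (D @ [CTVar b] @ xs) \<and> wf_typ (D @ [CTVar b] @ xs) A
  | CEVar a \<Rightarrow> a \<notin> evars (D @ [CTVar b] @ xs)
  | CSolved a t \<Rightarrow> a \<notin> evars (D @ [CTVar b] @ xs) \<and> mono t \<and> wf_typ (D @ [CTVar b] @ xs) t
  | CMarker a \<Rightarrow> a \<notin> evars (D @ [CTVar b] @ xs) \<and> a \<notin> markers (D @ [CTVar b] @ xs)"
    unfolding wf_ctx_snoc by auto
  from snoc.IH[OF w] c show ?case by (cases x) auto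
qed auto

lemma wf_ctx_marker_uniq: "wf_ctx (D @ [CMarker b] @ T) \<Longrightarrow> CMarker b \<notin> set T"
proof (induction T rule: rev_induct)
  case (snoc x xs)
  have "wf_ctx ((D @ [CMarker b] @ xs) @ [x])" using snoc.prems by simp
  then have w: "wf_ctx (D @ [CMarker b] @ xs)" and c: "case x of
    CTVar a \<Rightarrow> a \<notin> tvars (D @ [CMarker b] @ xs)
  | CVar x A \<Rightarrow> x \<notin> vars (D @ [CMarker b] @ xs) \<and> wf_typ (D @ [CMarker b] @ xs) A
  | CEVar a \<Rightarrow> a \<notin> evars (D @ [CMarker b] @ xs)
  | CSolved a t \<Rightarrow> a \<notin> evars (D @ [CMarker b] @ xs) \<and> mono t \<and> wf_typ (D @ [CMarker b] @ xs) t
  | CMarker a \<Rightarrow> a \<notin> evars (D @ [CMarker b] @ xs) \<and> a \<notin> markers (D @ [CMarker b] @ xs)"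
    unfolding wf_ctx_snoc by auto
  from snoc.IH[OF w] c show ?case by (cases x) auto
qed auto

lemma wf_ctx_solved: "wf_ctx G \<Longrightarrow> CSolved c t \<in> set G \<Longrightarrow> mono t \<and> ftv t \<subseteq> tvars G \<and> fev t \<subseteq> evars G"
proof (induction G rule: rev_induct)
  case (snoc x xs)
  then show ?case by (auto simp: wf_ctx_snoc wf_typ_char split: centry.splits)
qed auto

lemma capp_wf: "wf_ctx T \<Longrightarrow> wf_typ T A \<Longrightarrow> wf_typ T (capp T A)"
  unfolding capp_def wf_typ_char
  by (rule capp_rev_wf) (use wf_ctx_solved in auto)

lemma wf_ctx_replace: "wf_ctx (G @ G2) \<Longrightarrow> wf_ctx G' \<Longrightarrow> tvars G' = tvars G \<Longrightarrow> evars G \<subseteq> evars G'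
  \<Longrightarrow> markers G' = markers G \<Longrightarrow> vars G' = vars G
  \<Longrightarrow> (evars G' - evars G) \<inter> (evars G2 \<union> markers G2) = {} \<Longrightarrow> wf_ctx (G' @ G2)"
proof (induction G2 rule: rev_induct)
  case (snoc x xs)
  have "wf_ctx ((G @ xs) @ [x])" using snoc.prems by simp
  then have w: "wf_ctx (G @ xs)" and c: "case x of
    CTVar a \<Rightarrow> a \<notin> tvars (G @ xs)
  | CVar y A \<Rightarrow> y \<notin> vars (G @ xs) \<and> wf_typ (G @ xs) A
  | CEVar a \<Rightarrow> a \<notin> evars (G @ xs)
  | CSolved a t \<Rightarrow> a \<notin> evars (G @ xs) \<and> mono t \<and> wf_typ (G @ xs) t
  | CMarker a \<Rightarrow> a \<notin> evars (G @ xs) \<and> a \<notin> markers (G @ xs)"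
    unfolding wf_ctx_snoc by auto
  have "(evars G' - evars G) \<inter> (evars xs \<union> markers xs) = {}" using snoc.prems(7) by (cases x) auto
  then have IH: "wf_ctx (G' @ xs)" using snoc.IH[OF w] snoc.prems by auto
  have "case x of
    CTVar a \<Rightarrow> a \<notin> tvars (G' @ xs)
  | CVar y A \<Rightarrow> y \<notin> vars (G' @ xs) \<and> wf_typ (G' @ xs) A
  | CEVar a \<Rightarrow> a \<notin> evars (G' @ xs)
  | CSolved a t \<Rightarrow> a \<notin> evars (G' @ xs) \<and> mono t \<and> wf_typ (G' @ xs) t
  | CMarker a \<Rightarrow> a \<notin> evars (G' @ xs) \<and> a \<notin> markers (G' @ xs)"
    using c snoc.prems(3-7) by (cases x) (auto simp: wf_typ_char)
  then show ?case using IH by (simp only: append_assoc[symmetric] wf_ctx_snoc)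
qed simp

definition okv :: "nat set \<Rightarrow> ty \<Rightarrow> bool" where
  "okv S u \<longleftrightarrow> mono u \<and> fev u = {} \<and> ftv u \<subseteq> S"

fun validr :: "centry list \<Rightarrow> (nat \<Rightarrow> ty) \<Rightarrow> bool" where
  "validr [] th = True"
| "validr (CEVar a # R) th = (validr R th \<and> okv (tvars (rev R)) (th a))"
| "validr (CSolved a t # R) th = (validr R th \<and> okv (tvars (rev R)) (th a) \<and> th a = tsub th t)"
| "validr (CTVar a # R) th = validr R th"
| "validr (CVar x A # R) th = validr R th"
| "validr (CMarker a # R) th = validr R th"

definition valid :: "ctx \<Rightarrow> (nat \<Rightarrow> ty) \<Rightarrow> bool" where
  "valid G th = validr (rev G) th"

lemma valid_simps[simp]: "valid [] th"
  "valid (G @ [CEVar a]) th = (valid G th \<and> okv (tvars G) (th a))"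
  "valid (G @ [CSolved a t]) th = (valid G th \<and> okv (tvars G) (th a) \<and> th a = tsub th t)"
  "valid (G @ [CTVar a]) th = valid G th"
  "valid (G @ [CVar x A]) th = valid G th"
  "valid (G @ [CMarker a]) th = valid G th"
  by (simp_all add: valid_def)

lemma okv_mono: "okv S u \<Longrightarrow> S \<subseteq> S' \<Longrightarrow> okv S' u"
  by (auto simp: okv_def)

lemma valid_okv: "valid G th \<Longrightarrow> c \<in> evars G \<Longrightarrow> okv (tvars G) (th c)"
proof (induction G rule: rev_induct)
  case (snoc x xs)
  then show ?case by (cases x) (auto intro: okv_mono)
qed simp

lemma valid_solved: "valid G th \<Longrightarrow> CSolved c t \<in> set G \<Longrightarrow> th c = tsub th t"
proof (induction G rule: rev_induct)
  case (snoc x xs)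
  then show ?case by (cases x) auto
qed simp

lemma valid_cong: "wf_ctx G \<Longrightarrow> valid G th \<Longrightarrow> (\<forall>c\<in>evars G. th' c = th c) \<Longrightarrow> valid G th'"
proof (induction G rule: rev_induct)
  case (snoc x xs)
  then show ?case
  proof (cases x)
    case (CSolved a t)
    with snoc have "fev t \<subseteq> evars xs" by (auto simp: wf_ctx_snoc wf_typ_char)
    then have "tsub th' t = tsub th t" using snoc.prems by (intro tsub_cong) auto
    with snoc CSolved show ?thesis by (auto simp: wf_ctx_snoc)
  qed (auto simp: wf_ctx_snoc)
qed simp

lemma valid_extend: "wf_ctx (D @ X) \<Longrightarrow> valid D th \<Longrightarrow> \<exists>th'. valid (D @ X) th' \<and> (\<forall>c\<in>evars D. th' c = th c)"
proof (induction X rule: rev_induct)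
  case Nil
  then show ?case by auto
next
  case (snoc x xs)
  have w: "wf_ctx (D @ xs)" using snoc.prems(1) wf_ctx_prefix[of "D @ xs" "[x]"] by simp
  obtain th1 where v1: "valid (D @ xs) th1" and a1: "\<forall>c\<in>evars D. th1 c = th c"
    using snoc.IH[OF w snoc.prems(2)] by blast
  have c: "case x of
    CTVar a \<Rightarrow> a \<notin> tvars (D @ xs)
  | CVar y A \<Rightarrow> y \<notin> vars (D @ xs) \<and> wf_typ (D @ xs) A
  | CEVar a \<Rightarrow> a \<notin> evars (D @ xs)
  | CSolved a t \<Rightarrow> a \<notin> evars (D @ xs) \<and> mono t \<and> wf_typ (D @ xs) t
  | CMarker a \<Rightarrow> a \<notin> evars (D @ xs) \<and> a \<notin> markers (D @ xs)"
    using snoc.prems(1) wf_ctx_snoc[of "D @ xs" x] by simp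
  show ?case
  proof (cases x)
    case (CEVar a)
    define th2 where "th2 = th1(a := TUnit)"
    have e2: "th2 a = TUnit" "\<And>c. c \<noteq> a \<Longrightarrow> th2 c = th1 c" by (auto simp: th2_def)
    have "\<forall>c\<in>evars (D @ xs). th2 c = th1 c" using c CEVar unfolding th2_def by auto
    then have "valid (D @ xs) th2" using valid_cong[OF w v1, of th2] by blast
    moreover have "okv (tvars (D @ xs)) (th2 a)" by (simp add: okv_def e2)
    ultimately have "valid ((D @ xs) @ [CEVar a]) th2" unfolding valid_simps by blast
    moreover have "\<forall>c\<in>evars D. th2 c = th c" using a1 c CEVar unfolding th2_def by auto
    ultimately show ?thesis using CEVar by (intro exI[of _ th2]) simp
  next
    case (CSolved a t)
    define th2 where "th2 = th1(a := tsub th1 t)"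
    have e2: "th2 a = tsub th1 t" "\<And>c. c \<noteq> a \<Longrightarrow> th2 c = th1 c" by (auto simp: th2_def)
    have ft: "mono t" "fev t \<subseteq> evars (D @ xs)" "ftv t \<subseteq> tvars (D @ xs)" "a \<notin> evars (D @ xs)"
      using c CSolved by (auto simp: wf_typ_char)
    have "\<forall>c\<in>evars (D @ xs). th2 c = th1 c" using ft unfolding th2_def by auto
    then have "valid (D @ xs) th2" using valid_cong[OF w v1, of th2] by blast
    moreover have "tsub th2 t = tsub th1 t" using ft unfolding th2_def by (intro tsub_cong) auto
    moreover have "okv (tvars (D @ xs)) (tsub th1 t)"
    proof -
      have o: "\<forall>c\<in>fev t. okv (tvars (D @ xs)) (th1 c)" using ft valid_okv[OF v1] by auto
      have "mono (tsub th1 t)" using o ft by (intro mono_tsub) (auto simp: okv_def)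
      moreover have "fev (tsub th1 t) = {}" using o by (intro fev_tsub) (auto simp: okv_def)
      moreover have "ftv (tsub th1 t) \<subseteq> tvars (D @ xs)"
      proof -
        have "(\<Union>c\<in>fev t. ftv (th1 c)) \<subseteq> tvars (D @ xs)" using o by (auto simp: okv_def)
        then show ?thesis using ft(3) ftv_tsub[of th1 t] by blast
      qed
      ultimately show ?thesis by (simp add: okv_def)
    qed
    ultimately have "valid ((D @ xs) @ [CSolved a t]) th2" using e2 unfolding valid_simps by simp
    moreover have "\<forall>c\<in>evars D. th2 c = th c" using a1 ft unfolding th2_def by auto
    ultimately show ?thesis using CSolved by (intro exI[of _ th2]) simp
  qed (use v1 a1 in \<open>auto simp flip: append_assoc\<close>)
qed

lemma dsub_refl: "mono t \<Longrightarrow> fev t = {} \<Longrightarrow> ftv t \<subseteq> tvars P \<Longrightarrow> dsub P t t"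
  by (induction t) (auto intro: dsub.intros simp: tvars_def)

lemma dsub_refl_okv: "okv (tvars P) t \<Longrightarrow> dsub P t t"
  by (auto simp: okv_def intro: dsub_refl)

inductive ext :: "ctx \<Rightarrow> ctx \<Rightarrow> bool" where
  ext_nil: "ext [] []"
| ext_same: "ext G D \<Longrightarrow> ext (G @ [e]) (D @ [e])"
| ext_solve: "ext G D \<Longrightarrow> ext (G @ [CEVar a]) (D @ [CSolved a t])"
| ext_addE: "ext G D \<Longrightarrow> ext G (D @ [CEVar a])"
| ext_addS: "ext G D \<Longrightarrow> ext G (D @ [CSolved a t])"

lemma ext_refl: "ext G G"
  by (induction G rule: rev_induct) (auto intro: ext.intros)

lemma ext_app: "ext G D \<Longrightarrow> ext (G @ X) (D @ X)"
proof (induction X rule: rev_induct)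
  case (snoc x xs)
  then show ?case using ext_same[of "G @ xs" "D @ xs" x] by simp
qed simp

lemma ext_tvars: "ext G D \<Longrightarrow> tvars D = tvars G"
  by (induction rule: ext.induct) auto

lemma ext_evars: "ext G D \<Longrightarrow> evars G \<subseteq> evars D"
  by (induction rule: ext.induct) (auto split: centry.splits)

lemma ext_valid: "ext G D \<Longrightarrow> valid D th \<Longrightarrow> valid G th"
proof (induction rule: ext.induct)
  case (ext_same G D e)
  then show ?case using ext_tvars[OF ext_same.hyps] by (cases e) auto
next
  case (ext_solve G D a t)
  then show ?case using ext_tvars[OF ext_solve.hyps] by auto
qed auto

lemma ext_nil_inv: "ext G [] \<Longrightarrow> G = []"
  by (cases rule: ext.cases) auto

lemma ext_snoc_inv: "ext G (D @ [e]) \<Longrightarrow>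
   (\<exists>G'. G = G' @ [e] \<and> ext G' D) \<or> (\<exists>G' a t. e = CSolved a t \<and> G = G' @ [CEVar a] \<and> ext G' D)
   \<or> (((\<exists>a. e = CEVar a) \<or> (\<exists>a t. e = CSolved a t)) \<and> ext G D)"
  by (cases rule: ext.cases) auto

lemma ext_trans: "ext D E \<Longrightarrow> ext G D \<Longrightarrow> ext G E"
proof (induction D E arbitrary: G rule: ext.induct)
  case ext_nil
  then show ?case by simp
next
  case (ext_same D E e)
  from ext_snoc_inv[OF ext_same.prems] show ?case
    using ext_same.IH by (auto intro: ext.intros)
next
  case (ext_solve D E a t)
  from ext_snoc_inv[OF ext_solve.prems] show ?case
    using ext_solve.IH by (auto intro: ext.intros)
qed (auto intro: ext.intros)

lemma ext_split: "ext G' X \<Longrightarrow> G' = G @ [e] @ R \<Longrightarrow> (\<forall>x\<in>set R. \<exists>a. x = CEVar a) \<Longrightarrow> (\<forall>a. e \<noteq> CEVar a) \<Longrightarrow>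
   \<exists>D1 T1. X = D1 @ [e] @ T1 \<and> ext G D1 \<and> (\<forall>x\<in>set T1. (\<exists>a. x = CEVar a) \<or> (\<exists>a t. x = CSolved a t))"
proof (induction arbitrary: R rule: ext.induct)
  case ext_nil
  then show ?case by simp
next
  case (ext_same G1 D e')
  show ?case
  proof (cases R rule: rev_cases)
    case Nil
    then show ?thesis using ext_same by (intro exI[of _ D] exI[of _ "[]"]) auto
  next
    case (snoc R' y)
    with ext_same.prems have "G1 = G @ [e] @ R'" "e' = y" "\<forall>x\<in>set R'. \<exists>a. x = CEVar a" by auto
    then obtain D1 T1 where "D = D1 @ [e] @ T1" "ext G D1" "\<forall>x\<in>set T1. (\<exists>a. x = CEVar a) \<or> (\<exists>a t. x = CSolved a t)"
      using ext_same.IH ext_same.prems by blast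
    then show ?thesis using snoc ext_same.prems \<open>e' = y\<close> by (intro exI[of _ D1] exI[of _ "T1 @ [e']"]) auto
  qed
next
  case (ext_solve G1 D a t)
  show ?case
  proof (cases R rule: rev_cases)
    case Nil
    then show ?thesis using ext_solve by auto
  next
    case (snoc R' y)
    with ext_solve.prems have "G1 = G @ [e] @ R'" "\<forall>x\<in>set R'. \<exists>a. x = CEVar a" by auto
    then obtain D1 T1 where "D = D1 @ [e] @ T1" "ext G D1" "\<forall>x\<in>set T1. (\<exists>a. x = CEVar a) \<or> (\<exists>a t. x = CSolved a t)"
      using ext_solve.IH ext_solve.prems by blast
    then show ?thesis by (intro exI[of _ D1] exI[of _ "T1 @ [CSolved a t]"]) auto
  qed
next
  case (ext_addE G1 D a)
  then obtain D1 T1 where "D = D1 @ [e] @ T1" "ext G D1" "\<forall>x\<in>set T1. (\<exists>a. x = CEVar a) \<or> (\<exists>a t. x = CSolved a t)"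
    by blast
  then show ?case by (intro exI[of _ D1] exI[of _ "T1 @ [CEVar a]"]) auto
next
  case (ext_addS G1 D a t)
  then obtain D1 T1 where "D = D1 @ [e] @ T1" "ext G D1" "\<forall>x\<in>set T1. (\<exists>a. x = CEVar a) \<or> (\<exists>a t. x = CSolved a t)"
    by blast
  then show ?case by (intro exI[of _ D1] exI[of _ "T1 @ [CSolved a t]"]) auto
qed

lemma list_split_uniq: "D1 @ [e] @ T1 = D @ [e] @ T \<Longrightarrow> e \<notin> set T1 \<Longrightarrow> e \<notin> set T \<Longrightarrow> D1 = D"
proof (induction D1 arbitrary: D)
  case Nil
  then show ?case by (cases D) auto
next
  case (Cons x xs)
  then show ?case by (cases D) auto
qed

lemma ext_split_tvar: "ext (G @ [CTVar b]) (D @ [CTVar b] @ T) \<Longrightarrow> wf_ctx (D @ [CTVar b] @ T) \<Longrightarrow> ext G D"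
proof -
  assume a: "ext (G @ [CTVar b]) (D @ [CTVar b] @ T)" and w: "wf_ctx (D @ [CTVar b] @ T)"
  obtain D1 T1 where "D @ [CTVar b] @ T = D1 @ [CTVar b] @ T1" "ext G D1"
      "\<forall>x\<in>set T1. (\<exists>a. x = CEVar a) \<or> (\<exists>a t. x = CSolved a t)"
    using ext_split[OF a, of G "CTVar b" "[]"] by auto
  moreover have "CTVar b \<notin> set T" using wf_ctx_tvar_uniq[OF w] .
  ultimately show ?thesis using list_split_uniq[of D1 "CTVar b" T1 D T] by auto
qed

lemma ext_split_marker: "ext (G @ [CMarker b, CEVar b]) (D @ [CMarker b] @ T) \<Longrightarrow> wf_ctx (D @ [CMarker b] @ T) \<Longrightarrow> ext G D"
proof -
  assume a: "ext (G @ [CMarker b, CEVar b]) (D @ [CMarker b] @ T)" and w: "wf_ctx (D @ [CMarker b] @ T)"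
  obtain D1 T1 where "D @ [CMarker b] @ T = D1 @ [CMarker b] @ T1" "ext G D1"
      "\<forall>x\<in>set T1. (\<exists>a. x = CEVar a) \<or> (\<exists>a t. x = CSolved a t)"
    using ext_split[OF a, of G "CMarker b" "[CEVar b]"] by auto
  moreover have "CMarker b \<notin> set T" using wf_ctx_marker_uniq[OF w] .
  ultimately show ?thesis using list_split_uniq[of D1 "CMarker b" T1 D T] by auto
qed

lemma capp_tsub: "valid T th \<Longrightarrow> tsub th (capp T A) = tsub th A"
  unfolding capp_def by (rule capp_rev_tsub) (auto intro: valid_solved)

lemma okv_wf: "okv (tvars P) t \<Longrightarrow> wf_typ P t"
  by (auto simp: okv_def wf_typ_char mono_lcn)

lemma wf_open_tvar: "wf_typ G (TAll B) \<Longrightarrow> wf_typ (G @ [CTVar b]) (open_rec 0 (TVar b) B)"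
  unfolding wf_typ_char using lcn_open[of 0 B "TVar b"] ftv_open_sup[of 0 "TVar b" B] fev_open_sup[of 0 "TVar b" B]
  by auto

lemma wf_open_evar: "wf_typ G (TAll B) \<Longrightarrow> wf_typ (G @ [CMarker b, CEVar b]) (open_rec 0 (TEVar b) B)"
  unfolding wf_typ_char using lcn_open[of 0 B "TEVar b"] ftv_open_sup[of 0 "TEVar b" B] fev_open_sup[of 0 "TEVar b" B]
  by auto

lemma wf_typ_ctx: "wf_typ G A \<Longrightarrow> tvars G' = tvars G \<Longrightarrow> evars G \<subseteq> evars G' \<Longrightarrow> wf_typ G' A"
  unfolding wf_typ_char by auto

lemma ftv_tsub_bound: "(\<forall>c\<in>fev A. ftv (th c) \<subseteq> S) \<Longrightarrow> ftv (tsub th A) \<subseteq> ftv A \<union> S"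
  using ftv_tsub[of th A] by blast

lemma wf_solve_mid: "wf_ctx (G1 @ [CEVar a] @ G2) \<Longrightarrow> mono t \<Longrightarrow> wf_typ G1 t \<Longrightarrow> wf_ctx (G1 @ [CSolved a t] @ G2)"
proof -
  assume w: "wf_ctx (G1 @ [CEVar a] @ G2)" and m: "mono t" "wf_typ G1 t"
  have w1: "wf_ctx (G1 @ [CEVar a])" using wf_ctx_prefix[of "G1 @ [CEVar a]" G2] w by simp
  then have "wf_ctx G1" "a \<notin> evars G1" by (simp_all add: wf_ctx_snoc)
  then have "wf_ctx (G1 @ [CSolved a t])" using m by (simp add: wf_ctx_snoc)
  from wf_ctx_replace[of "G1 @ [CEVar a]" G2 "G1 @ [CSolved a t]", OF _ this] w
  show ?thesis by simp
qed

lemma wf_arr_mid: "wf_ctx (G1 @ [CEVar a] @ G2) \<Longrightarrow> a1 \<noteq> a2 \<Longrightarrow>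
  a1 \<notin> evars (G1 @ [CEVar a] @ G2) \<union> markers (G1 @ [CEVar a] @ G2) \<Longrightarrow>
  a2 \<notin> evars (G1 @ [CEVar a] @ G2) \<union> markers (G1 @ [CEVar a] @ G2) \<Longrightarrow>
  wf_ctx (G1 @ [CEVar a2, CEVar a1, CSolved a (TArr (TEVar a1) (TEVar a2))] @ G2)"
proof -
  assume w: "wf_ctx (G1 @ [CEVar a] @ G2)" and d: "a1 \<noteq> a2"
    "a1 \<notin> evars (G1 @ [CEVar a] @ G2) \<union> markers (G1 @ [CEVar a] @ G2)"
    "a2 \<notin> evars (G1 @ [CEVar a] @ G2) \<union> markers (G1 @ [CEVar a] @ G2)"
  have w1: "wf_ctx (G1 @ [CEVar a])" using wf_ctx_prefix[of "G1 @ [CEVar a]" G2] w by simp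
  then have g: "wf_ctx G1" "a \<notin> evars G1" by (simp_all add: wf_ctx_snoc)
  have "wf_ctx (((G1 @ [CEVar a2]) @ [CEVar a1]) @ [CSolved a (TArr (TEVar a1) (TEVar a2))])"
    using g d by (simp only: wf_ctx_snoc) (simp add: wf_typ_char)
  then have "wf_ctx (G1 @ [CEVar a2, CEVar a1, CSolved a (TArr (TEVar a1) (TEVar a2))])" by simp
  from wf_ctx_replace[of "G1 @ [CEVar a]" G2, OF _ this] w d
  show ?thesis by auto
qed

lemma ext_solve_mid: "ext (G1 @ [CEVar a] @ G2) (G1 @ [CSolved a t] @ G2)"
  using ext_app[where X=G2, OF ext_solve[where a=a and t=t, OF ext_refl[of G1]]] by simp

lemma ext_arr_mid: "ext (G1 @ [CEVar a] @ G2) (G1 @ [CEVar a2, CEVar a1, CSolved a t] @ G2)"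
  using ext_app[where X=G2, OF ext_solve[where a=a and t=t, OF ext_addE[where a=a1, OF ext_addE[where a=a2, OF ext_refl[of G1]]]]] by simp

lemma inst_sound:
  "instL G a A D \<Longrightarrow> wf_ctx G \<Longrightarrow> wf_typ G A \<Longrightarrow> wf_ctx D \<and> ext G D \<and>
     (\<forall>P th. tvars P = tvars G \<longrightarrow> valid D th \<longrightarrow> dsub P (th a) (tsub th A))"
  "instR G A a D \<Longrightarrow> wf_ctx G \<Longrightarrow> wf_typ G A \<Longrightarrow> wf_ctx D \<and> ext G D \<and>
     (\<forall>P th. tvars P = tvars G \<longrightarrow> valid D th \<longrightarrow> dsub P (tsub th A) (th a))"
proof (induction rule: instL_instR.inducts)
  case (instL_solve t G1 a G2)
  have w: "wf_ctx (G1 @ [CSolved a t] @ G2)" using wf_solve_mid instL_solve by blast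
  have e: "ext (G1 @ [CEVar a] @ G2) (G1 @ [CSolved a t] @ G2)" by (rule ext_solve_mid)
  show ?case
  proof (intro conjI allI impI w e)
    fix P th assume tP: "tvars P = tvars (G1 @ [CEVar a] @ G2)" and v: "valid (G1 @ [CSolved a t] @ G2) th"
    have "th a = tsub th t" using valid_solved[OF v] by simp
    moreover have "okv (tvars P) (th a)" using valid_okv[OF v, of a] tP by simp
    ultimately show "dsub P (th a) (tsub th t)" using dsub_refl_okv by metis
  qed
next
  case (instL_reach G1 a G2 b G3)
  have w: "wf_ctx ((G1 @ [CEVar a] @ G2) @ [CSolved b (TEVar a)] @ G3)"
    using wf_solve_mid[of "G1 @ [CEVar a] @ G2" b G3 "TEVar a"] instL_reach by (simp add: wf_typ_char)
  have e: "ext ((G1 @ [CEVar a] @ G2) @ [CEVar b] @ G3) ((G1 @ [CEVar a] @ G2) @ [CSolved b (TEVar a)] @ G3)"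
    by (rule ext_solve_mid)
  show ?case
  proof (intro conjI allI impI)
    show "wf_ctx (G1 @ [CEVar a] @ G2 @ [CSolved b (TEVar a)] @ G3)" using w by simp
    show "ext (G1 @ [CEVar a] @ G2 @ [CEVar b] @ G3) (G1 @ [CEVar a] @ G2 @ [CSolved b (TEVar a)] @ G3)" using e by simp
    fix P th assume tP: "tvars P = tvars (G1 @ [CEVar a] @ G2 @ [CEVar b] @ G3)"
      and v: "valid (G1 @ [CEVar a] @ G2 @ [CSolved b (TEVar a)] @ G3) th"
    have "th b = th a" using valid_solved[OF v, of b "TEVar a"] by simp
    moreover have "okv (tvars P) (th a)" using valid_okv[OF v, of a] tP by simp
    ultimately show "dsub P (th a) (tsub th (TEVar b))" using dsub_refl_okv by simp
  qed
next
  case (instL_arr a1 a2 G1 a G2 A1 A2 T D)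
  let ?G' = "G1 @ [CEVar a2, CEVar a1, CSolved a (TArr (TEVar a1) (TEVar a2))] @ G2"
  have w': "wf_ctx ?G'" using wf_arr_mid instL_arr by blast
  have e': "ext (G1 @ [CEVar a] @ G2) ?G'" by (rule ext_arr_mid)
  have wA1: "wf_typ ?G' A1" using instL_arr.prems(2) ext_tvars[OF e'] ext_evars[OF e']
    by (auto simp: wf_typ_char)
  from instL_arr.IH(1)[OF w' wA1] have wT: "wf_ctx T" and eT: "ext ?G' T"
    and s1: "\<forall>P th. tvars P = tvars ?G' \<longrightarrow> valid T th \<longrightarrow> dsub P (tsub th A1) (th a1)" by auto
  have eGT: "ext (G1 @ [CEVar a] @ G2) T" using ext_trans[OF eT e'] .
  have "wf_typ T A2"
    using instL_arr.prems(2) ext_tvars[OF eGT] ext_evars[OF eGT] by (auto simp: wf_typ_char)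
  then have wA2: "wf_typ T (capp T A2)" using capp_wf[OF wT] by blast
  from instL_arr.IH(2)[OF wT wA2] have wD: "wf_ctx D" and eD: "ext T D"
    and s2: "\<forall>P th. tvars P = tvars T \<longrightarrow> valid D th \<longrightarrow> dsub P (th a2) (tsub th (capp T A2))" by auto
  show ?case
  proof (intro conjI allI impI wD)
    show "ext (G1 @ [CEVar a] @ G2) D" using ext_trans[OF eD eGT] .
    fix P th assume tP: "tvars P = tvars (G1 @ [CEVar a] @ G2)" and v: "valid D th"
    have vT: "valid T th" using ext_valid[OF eD v] .
    have vG: "valid ?G' th" using ext_valid[OF eT vT] .
    have ta: "th a = TArr (th a1) (th a2)" using valid_solved[OF vG, of a "TArr (TEVar a1) (TEVar a2)"] by simp
    have d1: "dsub P (tsub th A1) (th a1)" using s1 tP ext_tvars[OF e'] vT by auto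
    have "dsub P (th a2) (tsub th (capp T A2))" using s2 tP ext_tvars[OF eGT] v by auto
    then have d2: "dsub P (th a2) (tsub th A2)" using capp_tsub[OF vT] by simp
    show "dsub P (th a) (tsub th (TArr A1 A2))" using ta d1 d2 by (auto intro: ds_arr)
  qed
next
  case (instL_allR a G b B D D')
  have wG: "wf_ctx (G @ [CTVar b])" using instL_allR by (simp add: wf_ctx_snoc)
  have wB: "wf_typ (G @ [CTVar b]) (open_typ B (TVar b))"
    using wf_open_tvar[OF instL_allR.prems(2)] by (simp add: open_typ_def)
  from instL_allR.IH[OF wG wB] have wD: "wf_ctx (D @ [CTVar b] @ D')"
    and eD: "ext (G @ [CTVar b]) (D @ [CTVar b] @ D')"
    and s: "\<forall>P th. tvars P = tvars (G @ [CTVar b]) \<longrightarrow> valid (D @ [CTVar b] @ D') th \<longrightarrow>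
        dsub P (th a) (tsub th (open_typ B (TVar b)))" by auto
  have eGD: "ext G D" using ext_split_tvar[OF eD wD] .
  show ?case
  proof (intro conjI allI impI eGD)
    show "wf_ctx D" using wf_ctx_prefix[of D "[CTVar b] @ D'"] wD by simp
    fix P th assume tP: "tvars P = tvars G" and v: "valid D th"
    obtain th' where v': "valid (D @ [CTVar b] @ D') th'" and ag: "\<forall>c\<in>evars D. th' c = th c"
      using valid_extend[OF wD v] by blast
    have evD: "evars G \<subseteq> evars D" using ext_evars[OF eGD] .
    have tvD: "tvars D = tvars G" using ext_tvars[OF eGD] .
    have aD: "a \<in> evars D" using instL_allR.hyps(1) evD by (auto simp: evars_def)
    have fB: "fev B \<subseteq> evars G" using instL_allR.prems(2) by (simp add: wf_typ_char)
    have okB: "\<forall>c\<in>fev B. okv (tvars G) (th c)" using fB evD valid_okv[OF v] tvD by auto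
    have "dsub (P @ [CTVar b]) (th' a) (tsub th' (open_typ B (TVar b)))"
      using s tP v' by auto
    moreover have "th' a = th a" using ag aD by auto
    moreover have "tsub th' (open_typ B (TVar b)) = open_rec 0 (TVar b) (tsub th B)"
    proof -
      have "tsub th' B = tsub th B" using ag fB evD by (intro tsub_cong) auto
      moreover have "\<forall>c\<in>fev B. mono (th' c)" using ag fB evD okB by (auto simp: okv_def)
      ultimately show ?thesis by (simp add: open_typ_def tsub_open)
    qed
    moreover have "b \<notin> ftv (th a)" using valid_okv[OF v aD] tvD instL_allR.hyps(2) by (auto simp: okv_def)
    moreover have "b \<notin> ftv (tsub th B)"
      using ftv_tsub_bound[of B th "tvars G"] okB instL_allR.hyps(2,3) by (auto simp: okv_def)
    ultimately show "dsub P (th a) (tsub th (TAll B))"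
      using tP instL_allR.hyps(2) by (auto intro!: ds_allR simp: open_typ_def)
  qed
next
  case (instR_solve t G1 a G2)
  have w: "wf_ctx (G1 @ [CSolved a t] @ G2)" using wf_solve_mid instR_solve by blast
  have e: "ext (G1 @ [CEVar a] @ G2) (G1 @ [CSolved a t] @ G2)" by (rule ext_solve_mid)
  show ?case
  proof (intro conjI allI impI w e)
    fix P th assume tP: "tvars P = tvars (G1 @ [CEVar a] @ G2)" and v: "valid (G1 @ [CSolved a t] @ G2) th"
    have "th a = tsub th t" using valid_solved[OF v] by simp
    moreover have "okv (tvars P) (th a)" using valid_okv[OF v, of a] tP by simp
    ultimately show "dsub P (tsub th t) (th a)" using dsub_refl_okv by metis
  qed
next
  case (instR_reach G1 a G2 b G3)
  have w: "wf_ctx ((G1 @ [CEVar a] @ G2) @ [CSolved b (TEVar a)] @ G3)"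
    using wf_solve_mid[of "G1 @ [CEVar a] @ G2" b G3 "TEVar a"] instR_reach by (simp add: wf_typ_char)
  have e: "ext ((G1 @ [CEVar a] @ G2) @ [CEVar b] @ G3) ((G1 @ [CEVar a] @ G2) @ [CSolved b (TEVar a)] @ G3)"
    by (rule ext_solve_mid)
  show ?case
  proof (intro conjI allI impI)
    show "wf_ctx (G1 @ [CEVar a] @ G2 @ [CSolved b (TEVar a)] @ G3)" using w by simp
    show "ext (G1 @ [CEVar a] @ G2 @ [CEVar b] @ G3) (G1 @ [CEVar a] @ G2 @ [CSolved b (TEVar a)] @ G3)" using e by simp
    fix P th assume tP: "tvars P = tvars (G1 @ [CEVar a] @ G2 @ [CEVar b] @ G3)"
      and v: "valid (G1 @ [CEVar a] @ G2 @ [CSolved b (TEVar a)] @ G3) th"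
    have "th b = th a" using valid_solved[OF v, of b "TEVar a"] by simp
    moreover have "okv (tvars P) (th a)" using valid_okv[OF v, of a] tP by simp
    ultimately show "dsub P (tsub th (TEVar b)) (th a)" using dsub_refl_okv by simp
  qed
next
  case (instR_arr a1 a2 G1 a G2 A1 A2 T D)
  let ?G' = "G1 @ [CEVar a2, CEVar a1, CSolved a (TArr (TEVar a1) (TEVar a2))] @ G2"
  have w': "wf_ctx ?G'" using wf_arr_mid instR_arr by blast
  have e': "ext (G1 @ [CEVar a] @ G2) ?G'" by (rule ext_arr_mid)
  have wA1: "wf_typ ?G' A1" using instR_arr.prems(2) ext_tvars[OF e'] ext_evars[OF e']
    by (auto simp: wf_typ_char)
  from instR_arr.IH(1)[OF w' wA1] have wT: "wf_ctx T" and eT: "ext ?G' T"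
    and s1: "\<forall>P th. tvars P = tvars ?G' \<longrightarrow> valid T th \<longrightarrow> dsub P (th a1) (tsub th A1)" by auto
  have eGT: "ext (G1 @ [CEVar a] @ G2) T" using ext_trans[OF eT e'] .
  have "wf_typ T A2"
    using instR_arr.prems(2) ext_tvars[OF eGT] ext_evars[OF eGT] by (auto simp: wf_typ_char)
  then have wA2: "wf_typ T (capp T A2)" using capp_wf[OF wT] by blast
  from instR_arr.IH(2)[OF wT wA2] have wD: "wf_ctx D" and eD: "ext T D"
    and s2: "\<forall>P th. tvars P = tvars T \<longrightarrow> valid D th \<longrightarrow> dsub P (tsub th (capp T A2)) (th a2)" by auto
  show ?case
  proof (intro conjI allI impI wD)
    show "ext (G1 @ [CEVar a] @ G2) D" using ext_trans[OF eD eGT] .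
    fix P th assume tP: "tvars P = tvars (G1 @ [CEVar a] @ G2)" and v: "valid D th"
    have vT: "valid T th" using ext_valid[OF eD v] .
    have vG: "valid ?G' th" using ext_valid[OF eT vT] .
    have ta: "th a = TArr (th a1) (th a2)" using valid_solved[OF vG, of a "TArr (TEVar a1) (TEVar a2)"] by simp
    have d1: "dsub P (th a1) (tsub th A1)" using s1 tP ext_tvars[OF e'] vT by auto
    have "dsub P (tsub th (capp T A2)) (th a2)" using s2 tP ext_tvars[OF eGT] v by auto
    then have d2: "dsub P (tsub th A2) (th a2)" using capp_tsub[OF vT] by simp
    show "dsub P (tsub th (TArr A1 A2)) (th a)" using ta d1 d2 by (auto intro: ds_arr)
  qed
next
  case (instR_allL a G b B D D')
  have wG: "wf_ctx (G @ [CMarker b, CEVar b])"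
  proof -
    have "wf_ctx ((G @ [CMarker b]) @ [CEVar b])" using instR_allL
      by (simp only: wf_ctx_snoc) simp
    then show ?thesis by simp
  qed
  have wB: "wf_typ (G @ [CMarker b, CEVar b]) (open_typ B (TEVar b))"
    using wf_open_evar[OF instR_allL.prems(2)] by (simp add: open_typ_def)
  from instR_allL.IH[OF wG wB] have wD: "wf_ctx (D @ [CMarker b] @ D')"
    and eD: "ext (G @ [CMarker b, CEVar b]) (D @ [CMarker b] @ D')"
    and s: "\<forall>P th. tvars P = tvars (G @ [CMarker b, CEVar b]) \<longrightarrow> valid (D @ [CMarker b] @ D') th \<longrightarrow>
        dsub P (tsub th (open_typ B (TEVar b))) (th a)" by auto
  have eGD: "ext G D" using ext_split_marker[OF eD wD] .
  show ?case
  proof (intro conjI allI impI eGD)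
    show "wf_ctx D" using wf_ctx_prefix[of D "[CMarker b] @ D'"] wD by simp
    fix P th assume tP: "tvars P = tvars G" and v: "valid D th"
    obtain th' where v': "valid (D @ [CMarker b] @ D') th'" and ag: "\<forall>c\<in>evars D. th' c = th c"
      using valid_extend[OF wD v] by blast
    have evD: "evars G \<subseteq> evars D" using ext_evars[OF eGD] .
    have tvD: "tvars D = tvars G" using ext_tvars[OF eGD] .
    have aD: "a \<in> evars D" using instR_allL.hyps(1) evD by (auto simp: evars_def)
    have fB: "fev B \<subseteq> evars G" using instR_allL.prems(2) by (simp add: wf_typ_char)
    have okB: "\<forall>c\<in>fev B. okv (tvars G) (th c)" using fB evD valid_okv[OF v] tvD by auto
    have "dsub P (tsub th' (open_typ B (TEVar b))) (th' a)"
      using s tP v' by auto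
    moreover have "th' a = th a" using ag aD by auto
    moreover have "tsub th' (open_typ B (TEVar b)) = open_typ (tsub th B) (th' b)"
    proof -
      have "tsub th' B = tsub th B" using ag fB evD by (intro tsub_cong) auto
      moreover have "\<forall>c\<in>fev B. mono (th' c)" using ag fB evD okB by (auto simp: okv_def)
      ultimately show ?thesis by (simp add: open_typ_def tsub_open)
    qed
    moreover have "okv (tvars P) (th' b)"
    proof -
      have "b \<in> evars (D @ [CMarker b] @ D')" using ext_evars[OF eD] by auto
      moreover have "tvars (D @ [CMarker b] @ D') = tvars G" using ext_tvars[OF eD] by simp
      ultimately show ?thesis using valid_okv[OF v'] tP by metis
    qed
    ultimately show "dsub P (tsub th (TAll B)) (th a)"
      by (auto intro!: ds_allL[where t="th' b"] okv_wf simp: okv_def)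
  qed
qed

lemma asub_sound:
  "asub G A B D \<Longrightarrow> wf_ctx G \<Longrightarrow> wf_typ G A \<Longrightarrow> wf_typ G B \<Longrightarrow> wf_ctx D \<and> ext G D \<and>
     (\<forall>P th. tvars P = tvars G \<longrightarrow> valid D th \<longrightarrow> dsub P (tsub th A) (tsub th B))"
proof (induction rule: asub.induct)
  case (as_var a G)
  then show ?case by (auto intro: ext_refl ds_var simp: tvars_def)
next
  case (as_unit G)
  then show ?case by (auto intro: ext_refl ds_unit)
next
  case (as_evar a G)
  show ?case
  proof (intro conjI allI impI ext_refl as_evar.prems(1))
    fix P th assume tP: "tvars P = tvars G" and v: "valid G th"
    have "a \<in> evars G" using as_evar.hyps by (auto simp: evars_def)
    then show "dsub P (tsub th (TEVar a)) (tsub th (TEVar a))"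
      using valid_okv[OF v] tP dsub_refl_okv by simp
  qed
next
  case (as_arr G B1 A1 T A2 B2 D)
  have wB1: "wf_typ G B1" "wf_typ G A1" using as_arr.prems by (auto simp: wf_typ_char)
  from as_arr.IH(1)[OF as_arr.prems(1) wB1(1) wB1(2)] have wT: "wf_ctx T" and eT: "ext G T"
    and s1: "\<forall>P th. tvars P = tvars G \<longrightarrow> valid T th \<longrightarrow> dsub P (tsub th B1) (tsub th A1)" by auto
  have "wf_typ T A2" "wf_typ T B2"
    using as_arr.prems(2,3) ext_tvars[OF eT] ext_evars[OF eT] by (auto simp: wf_typ_char)
  then have wA2: "wf_typ T (capp T A2)" "wf_typ T (capp T B2)" using capp_wf[OF wT] by blast+
  from as_arr.IH(2)[OF wT wA2] have wD: "wf_ctx D" and eD: "ext T D"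
    and s2: "\<forall>P th. tvars P = tvars T \<longrightarrow> valid D th \<longrightarrow> dsub P (tsub th (capp T A2)) (tsub th (capp T B2))" by auto
  show ?case
  proof (intro conjI allI impI wD)
    show "ext G D" using ext_trans[OF eD eT] .
    fix P th assume tP: "tvars P = tvars G" and v: "valid D th"
    have vT: "valid T th" using ext_valid[OF eD v] .
    have d1: "dsub P (tsub th B1) (tsub th A1)" using s1 tP vT by auto
    have "dsub P (tsub th (capp T A2)) (tsub th (capp T B2))" using s2 tP ext_tvars[OF eT] v by auto
    then have d2: "dsub P (tsub th A2) (tsub th B2)" using capp_tsub[OF vT] by simp
    show "dsub P (tsub th (TArr A1 A2)) (tsub th (TArr B1 B2))" using d1 d2 by (auto intro: ds_arr)
  qed
next
  case (as_allL a G A B D T)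
  have wG: "wf_ctx (G @ [CMarker a, CEVar a])"
  proof -
    have "wf_ctx ((G @ [CMarker a]) @ [CEVar a])" using as_allL
      by (simp only: wf_ctx_snoc) simp
    then show ?thesis by simp
  qed
  have wA: "wf_typ (G @ [CMarker a, CEVar a]) (open_typ A (TEVar a))"
    using wf_open_evar[OF as_allL.prems(2)] by (simp add: open_typ_def)
  have wB: "wf_typ (G @ [CMarker a, CEVar a]) B" using as_allL.prems(3) by (auto simp: wf_typ_char)
  from as_allL.IH[OF wG wA wB] have wD: "wf_ctx (D @ [CMarker a] @ T)"
    and eD: "ext (G @ [CMarker a, CEVar a]) (D @ [CMarker a] @ T)"
    and s: "\<forall>P th. tvars P = tvars (G @ [CMarker a, CEVar a]) \<longrightarrow> valid (D @ [CMarker a] @ T) th \<longrightarrow>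
        dsub P (tsub th (open_typ A (TEVar a))) (tsub th B)" by auto
  have eGD: "ext G D" using ext_split_marker[OF eD wD] .
  show ?case
  proof (intro conjI allI impI eGD)
    show "wf_ctx D" using wf_ctx_prefix[of D "[CMarker a] @ T"] wD by simp
    fix P th assume tP: "tvars P = tvars G" and v: "valid D th"
    obtain th' where v': "valid (D @ [CMarker a] @ T) th'" and ag: "\<forall>c\<in>evars D. th' c = th c"
      using valid_extend[OF wD v] by blast
    have evD: "evars G \<subseteq> evars D" using ext_evars[OF eGD] .
    have tvD: "tvars D = tvars G" using ext_tvars[OF eGD] .
    have fA: "fev A \<subseteq> evars G" "fev B \<subseteq> evars G" using as_allL.prems(2,3) by (simp_all add: wf_typ_char)
    have okA: "\<forall>c\<in>fev A. okv (tvars G) (th c)" using fA evD valid_okv[OF v] tvD by auto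
    have "dsub P (tsub th' (open_typ A (TEVar a))) (tsub th' B)"
      using s tP v' by auto
    moreover have "tsub th' B = tsub th B" using ag fA evD by (intro tsub_cong) auto
    moreover have "tsub th' (open_typ A (TEVar a)) = open_typ (tsub th A) (th' a)"
    proof -
      have "tsub th' A = tsub th A" using ag fA evD by (intro tsub_cong) auto
      moreover have "\<forall>c\<in>fev A. mono (th' c)" using ag fA evD okA by (auto simp: okv_def)
      ultimately show ?thesis by (simp add: open_typ_def tsub_open)
    qed
    moreover have "okv (tvars P) (th' a)"
    proof -
      have "a \<in> evars (D @ [CMarker a] @ T)" using ext_evars[OF eD] by auto
      moreover have "tvars (D @ [CMarker a] @ T) = tvars G" using ext_tvars[OF eD] by simp
      ultimately show ?thesis using valid_okv[OF v'] tP by metis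
    qed
    ultimately show "dsub P (tsub th (TAll A)) (tsub th B)"
      by (auto intro!: ds_allL[where t="th' a"] okv_wf simp: okv_def)
  qed
next
  case (as_allR b G A B D T)
  have wG: "wf_ctx (G @ [CTVar b])" using as_allR by (simp add: wf_ctx_snoc)
  have wB: "wf_typ (G @ [CTVar b]) (open_typ B (TVar b))"
    using wf_open_tvar[OF as_allR.prems(3)] by (simp add: open_typ_def)
  have wA: "wf_typ (G @ [CTVar b]) A" using as_allR.prems(2) by (auto simp: wf_typ_char)
  from as_allR.IH[OF wG wA wB] have wD: "wf_ctx (D @ [CTVar b] @ T)"
    and eD: "ext (G @ [CTVar b]) (D @ [CTVar b] @ T)"
    and s: "\<forall>P th. tvars P = tvars (G @ [CTVar b]) \<longrightarrow> valid (D @ [CTVar b] @ T) th \<longrightarrow>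
        dsub P (tsub th A) (tsub th (open_typ B (TVar b)))" by auto
  have eGD: "ext G D" using ext_split_tvar[OF eD wD] .
  show ?case
  proof (intro conjI allI impI eGD)
    show "wf_ctx D" using wf_ctx_prefix[of D "[CTVar b] @ T"] wD by simp
    fix P th assume tP: "tvars P = tvars G" and v: "valid D th"
    obtain th' where v': "valid (D @ [CTVar b] @ T) th'" and ag: "\<forall>c\<in>evars D. th' c = th c"
      using valid_extend[OF wD v] by blast
    have evD: "evars G \<subseteq> evars D" using ext_evars[OF eGD] .
    have tvD: "tvars D = tvars G" using ext_tvars[OF eGD] .
    have fB: "fev B \<subseteq> evars G" "fev A \<subseteq> evars G" using as_allR.prems(2,3) by (simp_all add: wf_typ_char)
    have okB: "\<forall>c\<in>fev B. okv (tvars G) (th c)" "\<forall>c\<in>fev A. okv (tvars G) (th c)"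
      using fB evD valid_okv[OF v] tvD by auto
    have "dsub (P @ [CTVar b]) (tsub th' A) (tsub th' (open_typ B (TVar b)))"
      using s tP v' by auto
    moreover have "tsub th' A = tsub th A" using ag fB evD by (intro tsub_cong) auto
    moreover have "tsub th' (open_typ B (TVar b)) = open_rec 0 (TVar b) (tsub th B)"
    proof -
      have "tsub th' B = tsub th B" using ag fB evD by (intro tsub_cong) auto
      moreover have "\<forall>c\<in>fev B. mono (th' c)" using ag fB evD okB by (auto simp: okv_def)
      ultimately show ?thesis by (simp add: open_typ_def tsub_open)
    qed
    moreover have "b \<notin> ftv (tsub th A)"
      using ftv_tsub_bound[of A th "tvars G"] okB(2) as_allR.hyps(1,2) by (auto simp: okv_def)
    moreover have "b \<notin> ftv (tsub th B)"
      using ftv_tsub_bound[of B th "tvars G"] okB(1) as_allR.hyps(1,2) by (auto simp: okv_def)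
    ultimately show "dsub P (tsub th A) (tsub th (TAll B))"
      using tP as_allR.hyps(1) by (auto intro!: ds_allR simp: open_typ_def)
  qed
next
  case (as_instL a G A D)
  then show ?case using inst_sound(1)[OF as_instL.hyps(3) as_instL.prems(1,3)] by simp
next
  case (as_instR a G A D)
  then show ?case using inst_sound(2)[OF as_instR.hyps(3) as_instR.prems(1,2)] by simp
qed

theorem mainTheorem7:
  assumes "decl_ctx \<Psi>" and "wf_ctx \<Psi>"
    and "wf_typ \<Psi> A" and "wf_typ \<Psi> B"
    and "asub \<Psi> A B \<Delta>"
  shows "dsub \<Psi> A B"
proof -
  from asub_sound[OF assms(5,2,3,4)] have wD: "wf_ctx \<Delta>"
    and s: "\<forall>P th. tvars P = tvars \<Psi> \<longrightarrow> valid \<Delta> th \<longrightarrow> dsub P (tsub th A) (tsub th B)" by auto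
  obtain th where v: "valid \<Delta> th" using valid_extend[of "[]" \<Delta> "\<lambda>_. TUnit"] wD by auto
  have "evars \<Psi> = {}" using assms(1) by (auto simp: decl_ctx_def evars_def)
  then have "fev A = {}" "fev B = {}" using assms(3,4) by (auto simp: wf_typ_char)
  moreover have "dsub \<Psi> (tsub th A) (tsub th B)" using s v by blast
  ultimately show ?thesis by (simp add: tsub_nofev)
qed

end
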